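(* Let $\beta>0$ and $k<0$ (so in particular $k<0<\frac{3}{3+\beta}$). Let \[f_{++}(x,y,z)=\beta(x^2y^2+y^2z^2+x^2z^2)+\Big(x^2+y^2+z^2+\tfrac12\Big)^2-\tfrac{1-k}{4}.\] Then the zero set $Q^{++}(k)=\{(x,y,z)\in\mathbb{R}^3: f_{++}(x,y,z)=0\}$ is a connected compact surface homeomorphic to a sphere.
   Context: $Q^{++}(k)$ is an octahedral quartic, i.e. $f_{++}$ is invariant under the group of $3\times 3$ signed permutation matrices. *)

theory Defs
  imports "HOL-Analysis.Analysis"
begin

definition f_pp :: "real \<Rightarrow> real \<Rightarrow> real ^ 3 \<Rightarrow> real" where
  "f_pp \<beta> k p = (let x = p $ 1; y = p $ 2; z = p $ 3 in
     \<beta> * (x^2 * y^2 + y^2 * z^2 + x^2 * z^2) + (x^2 + y^2 + z^2 + 1/2)^2 - (1 - k) / 4)"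

definition Q_pp :: "real \<Rightarrow> real \<Rightarrow> (real ^ 3) set" where
  "Q_pp \<beta> k = {p. f_pp \<beta> k p = 0}"

end

theory Submission
  imports Defs
begin

lemma norm3_sq: "norm (p::real^3) ^ 2 = p$1^2 + p$2^2 + p$3^2"
  unfolding power2_norm_eq_inner by (simp add: inner_vec_def sum_3 power2_eq_square)

definition sfun :: "real^3 \<Rightarrow> real" where
  "sfun u = u$1^2 * u$2^2 + u$2^2 * u$3^2 + u$1^2 * u$3^2"

definition afun :: "real \<Rightarrow> real^3 \<Rightarrow> real" where
  "afun \<beta> u = \<beta> * sfun u + 1"

definition tfun :: "real \<Rightarrow> real \<Rightarrow> real^3 \<Rightarrow> real" where
  "tfun \<beta> k u = (-1 + sqrt (1 - afun \<beta> u * k)) / (2 * afun \<beta> u)"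

lemma sfun_nn: "sfun u \<ge> 0" by (simp add: sfun_def)

lemma sfun_scale: "sfun (c *\<^sub>R u) = c^4 * sfun u"
  by (simp add: sfun_def power_mult_distrib algebra_simps)

lemma f_scale:
  assumes "norm u = 1"
  shows "f_pp \<beta> k (r *\<^sub>R u) = afun \<beta> u * (r^2)^2 + r^2 + k/4"
proof -
  have n: "u$1^2 + u$2^2 + u$3^2 = 1" using assms norm3_sq[of u] by simp
  have "f_pp \<beta> k (r *\<^sub>R u) = \<beta> * sfun (r *\<^sub>R u) + (r^2 * (u$1^2 + u$2^2 + u$3^2) + 1/2)^2 - (1-k)/4"
    by (simp add: f_pp_def sfun_def power_mult_distrib algebra_simps)
  also have "\<dots> = \<beta> * (r^4 * sfun u) + (r^2 + 1/2)^2 - (1-k)/4"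
    using n by (simp add: sfun_scale)
  also have "\<dots> = afun \<beta> u * (r^2)^2 + r^2 + k/4"
    by (simp add: afun_def power2_eq_square field_simps) algebra
  finally show ?thesis .
qed

lemma tfun_props:
  assumes "\<beta> > 0" "k < 0"
  shows "tfun \<beta> k u > 0" "afun \<beta> u * (tfun \<beta> k u)^2 + tfun \<beta> k u + k/4 = 0"
proof -
  let ?a = "afun \<beta> u"
  have a: "?a \<ge> 1" using assms sfun_nn[of u] by (simp add: afun_def)
  have d: "1 - ?a * k > 1" using a assms by (simp add: mult_pos_neg)
  have sq: "sqrt (1 - ?a*k) > 1" using d by simp
  show "tfun \<beta> k u > 0" unfolding tfun_def using sq a by simp
  have ss: "(sqrt (1 - ?a*k))^2 = 1 - ?a*k" using d by simp
  show "?a * (tfun \<beta> k u)^2 + tfun \<beta> k u + k/4 = 0"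
    unfolding tfun_def using a ss
    by (simp add: field_simps power2_eq_square)
qed

lemma root_unique:
  assumes "a \<ge> 1" "t \<ge> 0" "w \<ge> 0" "a*t^2 + t + k/4 = 0" "a * w^2 + w + k/4 = (0::real)"
  shows "t = w"
proof -
  have "(t - w) * (a*(t+w) + 1) = 0" using assms(4,5) by (simp add: algebra_simps power2_eq_square)
  moreover have "a*(t+w)+1 > 0" using assms(1-3) by (smt (verit) mult_nonneg_nonneg)
  ultimately show ?thesis by simp
qed

theorem lemma1:
  fixes \<beta> k :: real
  assumes "\<beta> > 0" and "k < 0"
  shows "connected (Q_pp \<beta> k) \<and> compact (Q_pp \<beta> k) \<and>
         Q_pp \<beta> k homeomorphic sphere (0 :: real ^ 3) 1"
proof -
  define h where "h u = sqrt (tfun \<beta> k u) *\<^sub>R u" for u :: "real^3"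
  have apos: "afun \<beta> u \<ge> 1" for u using assms sfun_nn[of u] by (simp add: afun_def)
  have cont: "continuous_on (sphere 0 1) h"
  proof -
    have "continuous_on UNIV (afun \<beta>)"
      unfolding afun_def sfun_def by (intro continuous_intros)
    hence ca: "continuous_on (sphere 0 1) (afun \<beta>)" by (rule continuous_on_subset) auto
    have "continuous_on (sphere 0 1) (tfun \<beta> k)"
      unfolding tfun_def using apos
      by (intro continuous_intros ca; smt (verit) apos)
    thus ?thesis unfolding h_def by (intro continuous_intros)
  qed
  have img: "h ` sphere 0 1 = Q_pp \<beta> k"
  proof
    show "h ` sphere 0 1 \<subseteq> Q_pp \<beta> k"
    proof
      fix p assume "p \<in> h ` sphere 0 1"
      then obtain u where u: "norm u = 1" "p = h u" by auto
      have s2: "(sqrt (tfun \<beta> k u))^2 = tfun \<beta> k u" using tfun_props(1)[OF assms, of u] by simp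
      have "(sqrt (tfun \<beta> k u))^4 = (tfun \<beta> k u)^2" by (metis s2 power_mult numeral_Bit0 numeral_One mult_2 one_add_one power_even_eq)
      with s2 show "p \<in> Q_pp \<beta> k" unfolding Q_pp_def using u f_scale[OF u(1)] tfun_props(2)[OF assms, of u]
        by (simp add: h_def)
    qed
    show "Q_pp \<beta> k \<subseteq> h ` sphere 0 1"
    proof
      fix p assume p: "p \<in> Q_pp \<beta> k"
      have "p \<noteq> 0"
      proof
        assume "p = 0"
        hence "f_pp \<beta> k p = k/4" by (simp add: f_pp_def power2_eq_square field_simps)
        with p assms show False by (simp add: Q_pp_def)
      qed
      hence np: "norm p > 0" by simp
      define u where "u = (1 / norm p) *\<^sub>R p"
      have nu: "norm u = 1" using np by (simp add: u_def)
      have pu: "p = norm p *\<^sub>R u" using np by (simp add: u_def)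
      have "f_pp \<beta> k (norm p *\<^sub>R u) = 0" using p pu by (simp add: Q_pp_def)
      hence eq: "afun \<beta> u * (norm p ^2)^2 + norm p^2 + k/4 = 0" using f_scale[OF nu] by simp
      have "norm p ^2 = tfun \<beta> k u"
        using root_unique[OF apos _ _ eq tfun_props(2)[OF assms]] tfun_props(1)[OF assms, of u] by simp
      hence "sqrt (tfun \<beta> k u) = norm p" by (metis norm_ge_zero real_sqrt_abs abs_of_nonneg)
      hence "p = h u" using pu by (simp add: h_def)
      thus "p \<in> h ` sphere 0 1" using nu by auto
    qed
  qed
  have inj: "inj_on h (sphere 0 1)"
  proof
    fix u v assume u: "u \<in> sphere (0::real^3) 1" and v: "v \<in> sphere (0::real^3) 1" and e: "h u = h v"
    have pu: "sqrt (tfun \<beta> k u) > 0" "sqrt (tfun \<beta> k v) > 0" using tfun_props(1)[OF assms] by auto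
    have "norm (h u) = sqrt (tfun \<beta> k u)" "norm (h v) = sqrt (tfun \<beta> k v)"
      using u v pu by (auto simp: h_def)
    hence "sqrt (tfun \<beta> k u) = sqrt (tfun \<beta> k v)" using e by simp
    thus "u = v" using e pu by (simp add: h_def)
  qed
  have hom: "sphere (0::real^3) 1 homeomorphic Q_pp \<beta> k"
    by (rule homeomorphic_compact[OF compact_sphere cont img inj])
  have "compact (Q_pp \<beta> k)"
    using compact_continuous_image[OF cont compact_sphere] img by simp
  moreover have "connected (Q_pp \<beta> k)"
    using connected_continuous_image[OF cont connected_sphere] img by simp
  ultimately show ?thesis using hom homeomorphic_sym by blast
qed

end
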